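(* Fix an integer base $b\ge 2$ and $f_*:\{0,\dots,b-1\}\to\mathbb{Z}^{\ge 0}$ with $f_*(0)=0$, $f_*(1)=1$, $\gcd(b,f_*(b-1))=1$, and suppose there is a digit $0\le m_*\le b-1$ with $\gcd(f(m_* )-m_*,f(b-1))=1$, where $f$ is the digit map $f\left(\sum_i a_ib^i\right)=\sum_i f_*(a_i)$ (base-$b$ representation). Let $u$ be a positive integer with $f^r(u)=u$ for some $r\ge 1$. Let $h$ be a $u$-integer. Then for every integer $a$ there exists a $u$-integer $l$ such that $l\equiv a \pmod{f(b-1)}$ and such that $l$ and $h$ are concurrently $u$-integers.
   Context: $f^r$ is the $r$-fold iterate of $f$. A positive integer $n$ is a $u$-integer if $f^r(n)=u$ for some $r\ge1$. Two positive integers $m,n$ are concurrently $u$-integers if there is some $r\ge 1$ with $f^r(m)=f^r(n)=u$. *)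

theory Defs
  imports "HOL-Number_Theory.Number_Theory"
begin

fun digmap :: "nat \<Rightarrow> (nat \<Rightarrow> nat) \<Rightarrow> nat \<Rightarrow> nat" where
  "digmap b fs n = (if n = 0 \<or> b < 2 then 0 else fs (n mod b) + digmap b fs (n div b))"

definition u_integer :: "nat \<Rightarrow> (nat \<Rightarrow> nat) \<Rightarrow> nat \<Rightarrow> nat \<Rightarrow> bool" where
  "u_integer b fs u n \<longleftrightarrow> n > 0 \<and> (\<exists>r\<ge>1. (digmap b fs ^^ r) n = u)"

definition concurrently_u :: "nat \<Rightarrow> (nat \<Rightarrow> nat) \<Rightarrow> nat \<Rightarrow> nat \<Rightarrow> nat \<Rightarrow> bool" where
  "concurrently_u b fs u m n \<longleftrightarrow> m > 0 \<and> n > 0 \<and>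
     (\<exists>r\<ge>1. (digmap b fs ^^ r) m = u \<and> (digmap b fs ^^ r) n = u)"

end

theory Submission
  imports Defs
begin

declare digmap.simps[simp del]

lemma digmap_0[simp]: "digmap b fs 0 = 0"
  by (subst digmap.simps) simp

lemma dm_step:
  assumes "b \<ge> 2" "fs 0 = 0" "c < b"
  shows "digmap b fs (x*b + c) = digmap b fs x + fs c"
proof (cases "x*b + c = 0")
  case True
  then have "x = 0" "c = 0" using assms by auto
  then show ?thesis using assms by simp
next
  case False
  have "(x*b+c) mod b = c" "(x*b+c) div b = x" using assms by auto
  then show ?thesis using False assms by (subst digmap.simps) simp
qed

lemma dm_pow:
  assumes "b \<ge> 2" "fs 0 = 0"
  shows "digmap b fs (x*b^k) = digmap b fs x"
proof (induction k)
  case 0 then show ?case by simp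
next
  case (Suc k)
  have eq: "x*b^Suc k = (x*b^k)*b + 0" by (simp add: algebra_simps)
  have "digmap b fs (x*b^Suc k) = digmap b fs ((x*b^k)*b + 0)" by (simp only: eq)
  also have "\<dots> = digmap b fs (x*b^k) + fs 0"
    by (rule dm_step[where b=b and fs=fs, OF assms]) (use assms in simp)
  also have "\<dots> = digmap b fs x" using Suc assms by simp
  finally show ?case .
qed

lemma dm_step2:
  assumes "b \<ge> 2" "fs 0 = 0" "c < b" "s \<ge> 1"
  shows "digmap b fs (y*b^s + c) = digmap b fs y + fs c"
proof -
  have eq: "y*b^s + c = (y*b^(s-1))*b + c" using assms(4)
    by (metis Suc_diff_le diff_Suc_1 mult.assoc power_Suc2)
  have "digmap b fs (y*b^s + c) = digmap b fs ((y*b^(s-1))*b + c)" by (simp only: eq)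
  also have "\<dots> = digmap b fs (y*b^(s-1)) + fs c"
    by (rule dm_step[where b=b and fs=fs, OF assms(1,2,3)])
  also have "\<dots> = digmap b fs y + fs c" using dm_pow[where b=b and fs=fs, OF assms(1,2)] by simp
  finally show ?thesis .
qed

fun gl :: "nat \<Rightarrow> nat list \<Rightarrow> nat" where
  "gl B [] = 0"
| "gl B (c#cs) = gl B cs * B + c"

lemma dm_gl:
  assumes "b \<ge> 2" "fs 0 = 0" "s \<ge> 1" "\<forall>c\<in>set cs. c < b"
  shows "digmap b fs (gl (b^s) cs) = sum_list (map fs cs)"
  using assms(4)
proof (induction cs)
  case Nil then show ?case by simp
next
  case (Cons c cs)
  then show ?case using dm_step2[where b=b and fs=fs, OF assms(1,2) _ assms(3), of c "gl (b^s) cs"] by simp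
qed

lemma cong_gl:
  assumes "[B = 1] (mod F)"
  shows "[gl B cs = sum_list cs] (mod F)"
proof (induction cs)
  case Nil then show ?case by simp
next
  case (Cons c cs)
  have "[gl B cs * B + c = sum_list cs * 1 + c] (mod F)"
    by (intro cong_add cong_mult Cons assms cong_refl)
  then show ?case by (simp add: add.commute)
qed

lemma dm_digit:
  assumes "b \<ge> 2" "fs 0 = 0" "m < b"
  shows "digmap b fs m = fs m"
  using dm_step[where b=b and fs=fs and x=0, OF assms(1,2,3)] by simp

lemma pow_fix:
  assumes "(f^^p) u = u"
  shows "(f^^(p*n)) u = u"
proof (induction n)
  case 0 then show ?case by simp
next
  case (Suc n)
  have "f^^(p*Suc n) = f^^(p*n) \<circ> f^^p" by (metis funpow_add mult_Suc_right add.commute)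
  then show ?case using Suc assms by simp
qed

lemma pow_zero:
  assumes "b \<ge> 2"
  shows "(digmap b fs ^^ n) 0 = 0"
  by (induction n) auto

theorem lemma2p3:
  fixes b :: nat and fs :: "nat \<Rightarrow> nat" and u h :: nat and a :: int
  assumes "b \<ge> 2"
    and "fs 0 = 0" and "fs 1 = 1"
    and "coprime b (fs (b - 1))"
    and "\<exists>m\<le>b - 1. gcd (int (digmap b fs m) - int m) (int (digmap b fs (b - 1))) = 1"
    and "u > 0" and "\<exists>r\<ge>1. (digmap b fs ^^ r) u = u"
    and "u_integer b fs u h"
  shows "\<exists>l. u_integer b fs u l \<and> [int l = a] (mod int (digmap b fs (b - 1)))
              \<and> concurrently_u b fs u l h"
proof -
  let ?f = "digmap b fs"
  define F where "F = fs (b - 1)"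
  have FF: "?f (b-1) = F" unfolding F_def using dm_digit[where b=b and fs=fs, OF assms(1,2)] assms(1) by simp
  have Fpos: "F > 0"
  proof (rule ccontr)
    assume "\<not> F > 0"
    then have "coprime b 0" using assms(4) unfolding F_def by simp
    then have "b = 1" by simp
    then show False using assms(1) by simp
  qed
  obtain m where m0': "m \<le> b - 1 \<and> gcd (int (?f m) - int m) (int (?f (b-1))) = 1"
    using assms(5) by (rule exE)
  note m0 = conjunct1[OF m0'] conjunct2[OF m0']
  have mb0: "m < b" using m0(1) assms(1) by linarith
  have m: "m \<le> b - 1" "gcd (int (fs m) - int m) (int F) = 1"
  proof -
    have e: "?f m = fs m" by (rule dm_digit[where b=b and fs=fs, OF assms(1,2) mb0])
    show "m \<le> b - 1" by (rule m0(1))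
    show "gcd (int (fs m) - int m) (int F) = 1" using m0(2) unfolding e FF .
  qed
  have mb: "m < b" using m(1) assms(1) by linarith
  define t where "t = fs m"
  define d where "d = int m - int t"
  have gd: "gcd d (int F) = 1"
  proof -
    have "int m - int t = -(int t - int m)" by simp
    then show ?thesis using m(2) unfolding d_def t_def by (simp only: gcd_neg1_int)
  qed
  obtain x y where xy: "x * d + y * int F = 1" using bezout_int[of d "int F"] gd by auto
  obtain r0 where r0: "r0 \<ge> 1" "(?f^^r0) h = u" using assms(8) unfolding u_integer_def by auto
  obtain p where p: "p \<ge> 1" "(?f^^p) u = u" using assms(7) by auto
  define v where "v = ?f h"
  have vpos: "v > 0"
  proof (rule ccontr)
    assume "\<not> v > 0"
    then have "?f h = 0" unfolding v_def by simp
    then have "(?f^^(r0-1)) (?f h) = 0" using pow_zero[OF assms(1)] by simp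
    moreover have "(?f^^r0) h = (?f^^(r0-1)) (?f h)" using r0(1)
      by (metis Suc_diff_le diff_Suc_1 funpow_Suc_right comp_apply)
    ultimately show False using r0 assms(6) by simp
  qed
  define T where "T = t * F"
  define w where "w = v * b^T"
  have "T < 2^T" by (rule less_exp)
  also have "2^T \<le> b^T" using assms(1) by (simp add: power_mono)
  also have "b^T \<le> w" unfolding w_def using vpos by simp
  finally have wT: "t * F \<le> w" unfolding T_def by simp
  have fw: "?f w = ?f v" unfolding w_def using dm_pow[where b=b and fs=fs, OF assms(1,2)] by simp
  define k0 where "k0 = ((a - int w) * x) mod int F"
  have k0: "0 \<le> k0" "k0 < int F" unfolding k0_def using Fpos by auto
  define k where "k = nat k0"
  have kF: "k < F" "int k = k0" using k0 unfolding k_def by auto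
  have tk: "t * k \<le> w" using mult_le_mono2[of k F t] kF(1) wT by linarith
  define cs where "cs = replicate k m @ replicate (w - t*k) 1"
  have csb: "\<forall>c\<in>set cs. c < b" unfolding cs_def using mb assms(1) by auto
  define s where "s = totient F"
  have s1: "s \<ge> 1" unfolding s_def using Fpos by (simp add: Suc_leI)
  have fs1: "fs (Suc 0) = 1" using assms(3) by simp
  define l where "l = gl (b^s) cs"
  have fl: "?f l = w" unfolding l_def using dm_gl[where b=b and fs=fs, OF assms(1,2) s1 csb] tk
    by (simp add: cs_def t_def fs1 sum_list_replicate mult.commute)
  have wpos: "w > 0" unfolding w_def using vpos assms(1) by simp
  have lpos: "l > 0"
  proof (rule ccontr)
    assume "\<not> l > 0"
    then have "l = 0" by simp
    then have "?f l = 0" by simp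
    then show False using fl wpos by simp
  qed
  have bs: "[b^s = 1] (mod F)" unfolding s_def F_def using euler_theorem assms(4) by simp
  have "[l = sum_list cs] (mod F)" unfolding l_def by (rule cong_gl[OF bs])
  then have c1: "[int l = int (sum_list cs)] (mod int F)" by (simp add: cong_int_iff)
  have "int (sum_list cs) = int k * int m + (int w - int t * int k)"
    unfolding cs_def using tk by (simp add: sum_list_replicate of_nat_diff)
  also have "\<dots> = int w + k0 * d" using kF unfolding d_def by (simp add: algebra_simps)
  finally have sc: "int (sum_list cs) = int w + k0 * d" .
  have cw: "[int w + k0 * d = a] (mod int F)"
  proof -
    define q where "q = ((a - int w) * x) div int F"
    have q: "k0 = (a - int w) * x - int F * q"
      unfolding k0_def q_def by (simp add: minus_div_mult_eq_mod[symmetric] mult.commute)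
    have xd: "x * d = 1 - y * int F" using xy by simp
    have "int w + k0 * d - a = int w + (a - int w) * (x * d) - int F * q * d - a"
      unfolding q by (simp add: algebra_simps)
    also have "\<dots> = int F * (- (a - int w) * y - q * d)"
      unfolding xd by (simp add: algebra_simps)
    finally have "int w + k0 * d - a = int F * (- (a - int w) * y - q * d)" .
    then have "int F dvd (int w + k0 * d - a)" by simp
    then show ?thesis by (simp add: cong_iff_dvd_diff)
  qed
  have cong: "[int l = a] (mod int (?f (b-1)))" using cong_trans[OF c1[unfolded sc] cw] FF by simp
  define R where "R = p*2 + r0"
  have R2: "R = Suc (Suc (p*2 + r0 - 2))" unfolding R_def using p(1) by simp
  have hR: "(?f^^R) h = u" unfolding R_def funpow_add using r0 pow_fix[OF p(2)] by simp
  have lR: "(?f^^R) l = (?f^^R) h"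
  proof -
    have "(?f^^R) l = (?f^^(p*2 + r0 - 2)) (?f (?f l))" by (subst R2) (simp only: funpow_Suc_right comp_apply)
    moreover have "(?f^^R) h = (?f^^(p*2 + r0 - 2)) (?f (?f h))" by (subst R2) (simp only: funpow_Suc_right comp_apply)
    ultimately show ?thesis using fl fw v_def by simp
  qed
  have R1: "R \<ge> 1" unfolding R_def using r0 by simp
  have hpos: "h > 0" using assms(8) unfolding u_integer_def by simp
  show ?thesis
    apply (rule exI[of _ l])
    using cong hR lR R1 lpos hpos unfolding u_integer_def concurrently_u_def by auto
qed

end
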